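(* Let $H$ be a complete $3$-graph whose edges (triples) are coloured red and blue, and let $d_r,d_b$ be positive integers such that $H$ has at least $d_r+d_b+1$ vertices. Fix a vertex $u$ of $H$. For each other vertex $v$, call the pair $uv$ red if $uv$ is contained in fewer than $d_r$ red triples, and blue if $uv$ is contained in fewer than $d_b$ blue triples. Then $u$ is in at most $2d_b$ red pairs, or $u$ is in at most $2d_r$ blue pairs.
   Context: A $3$-graph is a $3$-uniform hypergraph; the complete $3$-graph contains all triples of its vertex set. *)

theory Defs
  imports Main
begin

text \<open>A red/blue colouring of the complete 3-graph on a finite vertex set V is given by
  a predicate red on 3-element subsets; a triple is blue iff it is not red.\<close>

definition red_codeg :: "'a set \<Rightarrow> ('a set \<Rightarrow> bool) \<Rightarrow> 'a \<Rightarrow> 'a \<Rightarrow> nat" where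
  "red_codeg V red u v = card {w \<in> V - {u, v}. red {u, v, w}}"

definition blue_codeg :: "'a set \<Rightarrow> ('a set \<Rightarrow> bool) \<Rightarrow> 'a \<Rightarrow> 'a \<Rightarrow> nat" where
  "blue_codeg V red u v = card {w \<in> V - {u, v}. \<not> red {u, v, w}}"

definition red_pairs :: "'a set \<Rightarrow> ('a set \<Rightarrow> bool) \<Rightarrow> nat \<Rightarrow> 'a \<Rightarrow> 'a set" where
  "red_pairs V red d_r u = {v \<in> V - {u}. red_codeg V red u v < d_r}"

definition blue_pairs :: "'a set \<Rightarrow> ('a set \<Rightarrow> bool) \<Rightarrow> nat \<Rightarrow> 'a \<Rightarrow> 'a set" where
  "blue_pairs V red d_b u = {v \<in> V - {u}. blue_codeg V red u v < d_b}"

end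

theory Submission
  imports Defs
begin

theorem lemma2p2:
  fixes V :: "'a set" and red :: "'a set \<Rightarrow> bool" and d_r d_b :: nat and u :: 'a
  assumes "finite V"
    and "d_r > 0" and "d_b > 0"
    and "card V \<ge> d_r + d_b + 1"
    and "u \<in> V"
  shows "card (red_pairs V red d_r u) \<le> 2 * d_b \<or> card (blue_pairs V red d_b u) \<le> 2 * d_r"
proof (rule ccontr)
  assume neg: "\<not> (card (red_pairs V red d_r u) \<le> 2 * d_b \<or> card (blue_pairs V red d_b u) \<le> 2 * d_r)"
  define R where "R = red_pairs V red d_r u"
  define B where "B = blue_pairs V red d_b u"
  have xg: "card R \<ge> 2 * d_b + 1" and yg: "card B \<ge> 2 * d_r + 1"
    using neg R_def B_def by auto
  have RV: "R \<subseteq> V - {u}" and BV: "B \<subseteq> V - {u}"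
    unfolding R_def B_def red_pairs_def blue_pairs_def by auto
  have fR: "finite R" and fB: "finite B" using RV BV assms(1) by (auto intro: finite_subset)
  have sumc: "red_codeg V red u v + blue_codeg V red u v = card V - 2" if "v \<in> V - {u}" for v
  proof -
    have "card (V - {u, v}) = card V - 2"
      using that assms(1,5) by (auto simp add: card_Diff_subset card_insert_if numeral_2_eq_2)
    moreover have "card (V - {u, v}) = red_codeg V red u v + blue_codeg V red u v"
      unfolding red_codeg_def blue_codeg_def
    proof -
      have "V - {u, v} = {w \<in> V - {u, v}. red {u, v, w}} \<union> {w \<in> V - {u, v}. \<not> red {u, v, w}}" by auto
      then show "card (V - {u, v}) = card {w \<in> V - {u, v}. red {u, v, w}} + card {w \<in> V - {u, v}. \<not> red {u, v, w}}"
        using assms(1) by (metis (no_types, lifting) card_Un_disjoint disjoint_iff finite_Diff finite_Un mem_Collect_eq)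
    qed
    ultimately show ?thesis by simp
  qed
  have disj: "R \<inter> B = {}"
  proof (rule ccontr)
    assume "R \<inter> B \<noteq> {}"
    then obtain v where v: "v \<in> R" "v \<in> B" by auto
    then have "red_codeg V red u v < d_r" "blue_codeg V red u v < d_b" "v \<in> V - {u}"
      unfolding R_def B_def red_pairs_def blue_pairs_def by auto
    with sumc[OF this(3)] assms(4) show False by linarith
  qed
  define Sr where "Sr = Sigma R (\<lambda>v. {w \<in> B. red {u, v, w}})"
  define Sb where "Sb = Sigma R (\<lambda>v. {w \<in> B. \<not> red {u, v, w}})"
  define Sb' where "Sb' = Sigma B (\<lambda>w. {v \<in> R. \<not> red {u, v, w}})"
  have "R \<times> B = Sr \<union> Sb" unfolding Sr_def Sb_def by auto
  moreover have "Sr \<inter> Sb = {}" unfolding Sr_def Sb_def by auto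
  moreover have "finite Sr" "finite Sb" unfolding Sr_def Sb_def using fR fB by auto
  ultimately have tot: "card R * card B = card Sr + card Sb"
    by (metis card_Un_disjoint card_cartesian_product)
  have "Sb = prod.swap ` Sb'" unfolding Sb_def Sb'_def by auto
  then have cSb: "card Sb = card Sb'" by (simp add: card_image)
  have "card Sr = (\<Sum>v\<in>R. card {w \<in> B. red {u, v, w}})"
    unfolding Sr_def using fR fB by (simp add: card_SigmaI)
  also have "\<dots> \<le> (\<Sum>v\<in>R. d_r - 1)"
  proof (rule sum_mono)
    fix v assume v: "v \<in> R"
    have "{w \<in> B. red {u, v, w}} \<subseteq> {w \<in> V - {u, v}. red {u, v, w}}"
      using v disj BV by auto
    then have "card {w \<in> B. red {u, v, w}} \<le> red_codeg V red u v"
      unfolding red_codeg_def using assms(1) by (simp add: card_mono)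
    moreover have "red_codeg V red u v < d_r" using v unfolding R_def red_pairs_def by auto
    ultimately show "card {w \<in> B. red {u, v, w}} \<le> d_r - 1" by linarith
  qed
  finally have c1: "card Sr \<le> card R * (d_r - 1)" by simp
  have "card Sb' = (\<Sum>w\<in>B. card {v \<in> R. \<not> red {u, v, w}})"
    unfolding Sb'_def using fR fB by (simp add: card_SigmaI)
  also have "\<dots> \<le> (\<Sum>w\<in>B. d_b - 1)"
  proof (rule sum_mono)
    fix w assume w: "w \<in> B"
    have "{v \<in> R. \<not> red {u, v, w}} \<subseteq> {v \<in> V - {u, w}. \<not> red {u, w, v}}"
      using w disj RV by (auto simp: insert_commute)
    then have "card {v \<in> R. \<not> red {u, v, w}} \<le> blue_codeg V red u w"
      unfolding blue_codeg_def using assms(1) by (simp add: card_mono)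
    moreover have "blue_codeg V red u w < d_b" using w unfolding B_def blue_pairs_def by auto
    ultimately show "card {v \<in> R. \<not> red {u, v, w}} \<le> d_b - 1" by linarith
  qed
  finally have c2: "card Sb' \<le> card B * (d_b - 1)" by simp
  define x where "x = card R"
  define y where "y = card B"
  have main: "x * y \<le> x * (d_r - 1) + y * (d_b - 1)"
    using tot cSb c1 c2 unfolding x_def y_def by linarith
  have "x * y \<ge> x * (2 * d_r + 1)" unfolding y_def using yg by (rule mult_le_mono2)
  moreover have "x * y \<ge> (2 * d_b + 1) * y" unfolding x_def using xg by (rule mult_le_mono1)
  ultimately have "2 * (x * y) \<ge> x * (2 * d_r + 1) + y * (2 * d_b + 1)" by (simp add: mult.commute)
  moreover have "x * (2 * d_r + 1) \<ge> 2 * (x * (d_r - 1)) + x" by (simp add: algebra_simps)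
  moreover have "y * (2 * d_b + 1) \<ge> 2 * (y * (d_b - 1)) + y" by (simp add: algebra_simps)
  moreover have "x > 0" unfolding x_def using xg by simp
  ultimately show False using main by linarith
qed

end
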